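(* Let $F$ be a field of characteristic zero and let $D$ be a derivation of the Lie algebra $W^*(1,0)$ with $D(\partial)=0$. Then $D=f\,\mathrm{ad}_{\partial}+S$ for some $f\in F$ and some scalar derivation $S$ of $W^*(1,0)$.
   Context: $W^*(1,0)$ is the Lie algebra over $F$ with basis $\{e^{ax}x^i\partial: a\in\mathbb Z, i\in\mathbb N\}$ ($\mathbb N$ the nonnegative integers), viewed as vector fields $f\partial$ with $f$ in the $F$-algebra $F[e^{\pm x},x]$ (basis $e^{ax}x^i$, multiplication adding exponents, $\partial(e^{ax}x^i)=ae^{ax}x^i+ie^{ax}x^{i-1}$), with bracket $[f\partial,g\partial]=(f\partial(g)-g\partial(f))\partial$; $\partial$ denotes the basis element $e^{0x}x^0\partial$ and $\mathrm{ad}_\partial=[\partial,\cdot]$. A derivation $D$ is a scalar derivation if for every basis element $l$ one has $D(l)=f_l\,l$ for some scalar $f_l\in F$. *)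

theory Defs
  imports "HOL-Library.Poly_Mapping" "HOL-Library.Product_Plus"
begin

text \<open>The algebra F[e^{+-x}, x]: finitely supported coefficient functions on
  the basis e^{ax} x^i, indexed by (a,i) :: int * nat.  Multiplication is the
  convolution product of Poly_Mapping, with keys added componentwise
  (e^{ax}x^i * e^{bx}x^j = e^{(a+b)x}x^{i+j}).  A vector field f\<partial> of
  W^*(1,0) is identified with its coefficient f.\<close>

type_synonym 'a Walg = "(int \<times> nat) \<Rightarrow>\<^sub>0 'a"

definition wbasis :: "int \<Rightarrow> nat \<Rightarrow> 'a::field Walg" where
  "wbasis a i = Poly_Mapping.single (a, i) 1"

definition wscale :: "'a::field \<Rightarrow> 'a Walg \<Rightarrow> 'a Walg" where
  "wscale c f = Poly_Mapping.map (\<lambda>v. c * v) f"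

definition wdiff_basis :: "int \<times> nat \<Rightarrow> 'a::field Walg" where
  "wdiff_basis p = Poly_Mapping.single p (of_int (fst p))
                 + Poly_Mapping.single (fst p, snd p - 1) (of_nat (snd p))"

definition wdiff :: "'a::field Walg \<Rightarrow> 'a Walg" where
  "wdiff f = (\<Sum>p\<in>Poly_Mapping.keys f. wscale (Poly_Mapping.lookup f p) (wdiff_basis p))"

definition wbracket :: "'a::field Walg \<Rightarrow> 'a Walg \<Rightarrow> 'a Walg" where
  "wbracket f g = f * wdiff g - g * wdiff f"

definition wpartial :: "'a::field Walg" where
  "wpartial = wbasis 0 0"

definition is_wderivation :: "('a::field Walg \<Rightarrow> 'a Walg) \<Rightarrow> bool" where
  "is_wderivation D \<longleftrightarrow>
     (\<forall>x y. D (x + y) = D x + D y) \<and>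
     (\<forall>c x. D (wscale c x) = wscale c (D x)) \<and>
     (\<forall>x y. D (wbracket x y) = wbracket (D x) y + wbracket x (D y))"

definition is_scalar_wderivation :: "('a::field Walg \<Rightarrow> 'a Walg) \<Rightarrow> bool" where
  "is_scalar_wderivation D \<longleftrightarrow> is_wderivation D \<and>
     (\<forall>a i. \<exists>c. D (wbasis a i) = wscale c (wbasis a i))"

end

theory Submission
  imports Defs
begin

lemma lookup_wscale [simp]: "Poly_Mapping.lookup (wscale c f) k = c * Poly_Mapping.lookup f k"
  unfolding wscale_def by (simp add: Poly_Mapping.map.rep_eq when_def)

lemma wscale_zero_left [simp]: "wscale 0 x = 0"
  by (rule poly_mapping_eqI) simp

lemma wscale_zero_right [simp]: "wscale c 0 = 0"
  by (rule poly_mapping_eqI) simp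

lemma wscale_one [simp]: "wscale 1 x = x"
  by (rule poly_mapping_eqI) simp

lemma wscale_wscale [simp]: "wscale c (wscale d x) = wscale (c * d) x"
  by (rule poly_mapping_eqI) simp

lemma wscale_neg_one [simp]: "wscale (-1) x = - x"
  by (rule poly_mapping_eqI) simp

lemma wscale_add: "wscale c (x + y) = wscale c x + wscale c y"
  by (rule poly_mapping_eqI) (simp add: lookup_add algebra_simps)

lemma wscale_diff: "wscale c (x - y) = wscale c x - wscale c y"
  by (rule poly_mapping_eqI) (simp add: lookup_minus algebra_simps)

lemma wscale_conv: "wscale c f = Poly_Mapping.single 0 c * f"
  unfolding wscale_def using mult_map_scale_conv_mult[of c f] by (simp add: fun_eq_iff)

lemma lookup_wdiff_basis:
  "Poly_Mapping.lookup (wdiff_basis p) (b,j) =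
     (if p = (b,j) then of_int b else 0) + (if p = (b, Suc j) then of_nat (Suc j) else 0)"
proof (cases p)
  case (Pair a i)
  then show ?thesis unfolding wdiff_basis_def by (cases i) (auto simp: lookup_add lookup_single when_def)
qed

lemma lookup_wdiff:
  "Poly_Mapping.lookup (wdiff f) (b,j) =
     of_int b * Poly_Mapping.lookup f (b,j) + of_nat (Suc j) * Poly_Mapping.lookup f (b, Suc j)"
proof -
  let ?K = "Poly_Mapping.keys f"
  let ?l = "Poly_Mapping.lookup f"
  have "Poly_Mapping.lookup (wdiff f) (b,j) =
     (\<Sum>p\<in>?K. ?l p * ((if p = (b,j) then of_int b else 0) + (if p = (b, Suc j) then of_nat (Suc j) else 0)))"
    unfolding wdiff_def lookup_sum by (simp add: lookup_wdiff_basis)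
  also have "\<dots> = (\<Sum>p\<in>?K. (if p = (b,j) then ?l p * of_int b else 0))
      + (\<Sum>p\<in>?K. (if p = (b, Suc j) then ?l p * of_nat (Suc j) else 0))"
    unfolding sum.distrib[symmetric] by (rule sum.cong) auto
  also have "\<dots> = of_int b * ?l (b,j) + of_nat (Suc j) * ?l (b, Suc j)"
    by (simp add: sum.delta in_keys_iff mult.commute)
  finally show ?thesis .
qed

lemma wdiff_add: "wdiff (x + y) = wdiff x + wdiff y"
  by (rule poly_mapping_eqI, case_tac k) (simp add: lookup_wdiff lookup_add algebra_simps)

lemma wdiff_diff: "wdiff (x - y) = wdiff x - wdiff y"
  by (rule poly_mapping_eqI, case_tac k) (simp add: lookup_wdiff lookup_minus algebra_simps)

lemma wdiff_zero [simp]: "wdiff 0 = 0"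
  by (rule poly_mapping_eqI, case_tac k) (simp add: lookup_wdiff)

lemma wdiff_scale: "wdiff (wscale c x) = wscale c (wdiff x)"
  by (rule poly_mapping_eqI, case_tac k) (simp add: lookup_wdiff algebra_simps)

lemma wdiff_single:
  "wdiff (Poly_Mapping.single (a,i) c) =
     Poly_Mapping.single (a,i) (of_int a * c) + Poly_Mapping.single (a, i - 1) (of_nat i * c)"
  apply (rule poly_mapping_eqI, case_tac k)
  apply (cases i)
   apply (auto simp: lookup_wdiff lookup_add lookup_single when_def)
  done

lemma wdiff_one [simp]: "wdiff (1 :: 'a::field Walg) = 0"
proof -
  have "(1 :: 'a Walg) = Poly_Mapping.single (0,0) 1"
    by (metis single_one zero_prod_def)
  then have "wdiff (1 :: 'a Walg) = wdiff (Poly_Mapping.single (0,0) 1)" by simp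
  also have "\<dots> = 0" by (simp add: wdiff_single)
  finally show ?thesis .
qed

lemma wdiff_prod_single:
  "wdiff (Poly_Mapping.single p c * Poly_Mapping.single q d) =
    wdiff (Poly_Mapping.single p c) * Poly_Mapping.single q d
    + Poly_Mapping.single p c * wdiff (Poly_Mapping.single q d)"
proof (cases p; cases q)
  fix a i b k
  assume pq: "p = (a,i)" "q = (b,k)"
  show ?thesis unfolding pq mult_single wdiff_single distrib_right distrib_left
    apply (rule poly_mapping_eqI, case_tac ka)
    apply (cases i; cases k)
       apply (auto simp: lookup_wdiff lookup_add lookup_single when_def algebra_simps)
    done
qed

lemma update_as_add: "a \<notin> Poly_Mapping.keys f \<Longrightarrow> Poly_Mapping.update a b f = f + Poly_Mapping.single a b"
  by (rule poly_mapping_eqI) (auto simp: lookup_update lookup_add lookup_single when_def in_keys_iff)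

lemma single_induct:
  assumes "P 0" "\<And>f a b. P f \<Longrightarrow> P (f + Poly_Mapping.single a b)"
  shows "P f"
  by (induct f rule: update_induct) (auto simp: update_as_add assms)

lemma wdiff_mult: "wdiff (x * y) = wdiff x * y + x * wdiff y"
proof (induct x rule: single_induct)
  case 1 then show ?case by simp
next
  case (2 f a b)
  have "wdiff (Poly_Mapping.single a b * y) = wdiff (Poly_Mapping.single a b) * y + Poly_Mapping.single a b * wdiff y"
  proof (induct y rule: single_induct)
    case 1 then show ?case by simp
  next
    case (2 g c d)
    then show ?case by (simp add: distrib_left distrib_right wdiff_add wdiff_prod_single algebra_simps)
  qed
  with 2 show ?case by (simp add: distrib_left distrib_right wdiff_add algebra_simps)
qed

lemma wpartial_one: "wpartial = 1"
  unfolding wpartial_def wbasis_def by (metis single_one zero_prod_def)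

lemma wbracket_partial: "wbracket wpartial x = wdiff x"
  unfolding wbracket_def wpartial_one by simp

lemma wbracket_zero1 [simp]: "wbracket 0 x = 0"
  unfolding wbracket_def by simp

lemma wbracket_zero2 [simp]: "wbracket x 0 = 0"
  unfolding wbracket_def by simp

lemma wbracket_add1: "wbracket (x + y) z = wbracket x z + wbracket y z"
  unfolding wbracket_def by (simp add: wdiff_add algebra_simps)

lemma wbracket_add2: "wbracket z (x + y) = wbracket z x + wbracket z y"
  unfolding wbracket_def by (simp add: wdiff_add algebra_simps)

lemma wbracket_diff1: "wbracket (x - y) z = wbracket x z - wbracket y z"
  unfolding wbracket_def by (simp add: wdiff_diff algebra_simps)

lemma wbracket_diff2: "wbracket z (x - y) = wbracket z x - wbracket z y"
  unfolding wbracket_def by (simp add: wdiff_diff algebra_simps)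

lemma wbracket_scale1: "wbracket (wscale c x) y = wscale c (wbracket x y)"
  unfolding wbracket_def wdiff_scale by (simp add: wscale_conv algebra_simps)

lemma wbracket_scale2: "wbracket y (wscale c x) = wscale c (wbracket y x)"
  unfolding wbracket_def wdiff_scale by (simp add: wscale_conv algebra_simps)

lemma wdiff_wbracket: "wdiff (wbracket x y) = wbracket (wdiff x) y + wbracket x (wdiff y)"
  unfolding wbracket_def by (simp add: wdiff_mult wdiff_diff algebra_simps)

lemma wdiff_wbasis:
  "wdiff (wbasis a i) = wscale (of_int a) (wbasis a i) + wscale (of_nat i) (wbasis a (i - 1))"
  unfolding wbasis_def wdiff_single
  by (rule poly_mapping_eqI) (simp add: lookup_add lookup_single when_def)

lemma wbracket_x_basis:
  "wbracket (wbasis 0 1) (wbasis a i) =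
     wscale (of_int a) (wbasis a (Suc i)) + wscale (of_nat i - 1) (wbasis a i)"
  unfolding wbracket_def wdiff_wbasis
  unfolding wbasis_def wscale_conv distrib_left mult_single
  apply (rule poly_mapping_eqI, case_tac k)
  apply (cases i)
   apply (auto simp: lookup_add lookup_minus lookup_single when_def algebra_simps)
  done

lemma lookup_wbasis: "Poly_Mapping.lookup (wbasis a i) k = (if k = (a,i) then 1 else 0)"
  unfolding wbasis_def by (simp add: lookup_single when_def)

lemma wscale_eq_iff: "(x = y) \<longleftrightarrow> (\<forall>k. Poly_Mapping.lookup x k = Poly_Mapping.lookup y k)"
  using poly_mapping_eqI by auto

lemma wdiff_kernel:
  fixes y :: "'a::field_char_0 Walg"
  assumes h: "wdiff y = wscale (of_int a) y"
  shows "y = wscale (Poly_Mapping.lookup y (a,0)) (wbasis a 0)"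
proof -
  let ?l = "Poly_Mapping.lookup y"
  have eq: "of_int b * ?l (b,j) + of_nat (Suc j) * ?l (b,Suc j) = of_int a * ?l (b,j)" for b j
    using arg_cong[OF h, of "\<lambda>z. Poly_Mapping.lookup z (b,j)"] by (simp add: lookup_wdiff)
  have z: "?l (b,j) = 0" if nba: "(b,j) \<noteq> (a,0)" for b j
  proof (cases "b = a")
    case True
    then obtain j' where j': "j = Suc j'" using nba True by (cases j) auto
    have "of_nat (Suc j') * ?l (a, Suc j') = (0::'a)" using eq[of a j'] by simp
    then show ?thesis using True j' by (simp del: of_nat_Suc)
  next
    case False
    have ne: "of_int b - of_int a \<noteq> (0::'a)" using False by simp
    show ?thesis
    proof (rule ccontr)
      assume nz: "?l (b,j) \<noteq> 0"
      have all: "?l (b, j + n) \<noteq> 0" for n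
      proof (induct n)
        case 0 then show ?case using nz by simp
      next
        case (Suc n)
        show ?case
        proof
          assume "?l (b, j + Suc n) = 0"
          then have "(of_int b - of_int a) * ?l (b, j + n) = 0"
            using eq[of b "j + n"] by (simp add: algebra_simps)
          then show False using ne Suc by simp
        qed
      qed
      have "range (\<lambda>n. (b, j + n)) \<subseteq> Poly_Mapping.keys y"
        using all by (auto simp: in_keys_iff)
      moreover have "infinite (range (\<lambda>n. (b, j + n)))"
      proof
        assume "finite (range (\<lambda>n. (b, j + n)))"
        then have "finite (UNIV :: nat set)"
          by (rule finite_imageD) (auto simp: inj_on_def)
        then show False by simp
      qed
      ultimately show False using finite_subset[OF _ finite_keys] by blast
    qed
  qed
  show ?thesis
  proof (rule poly_mapping_eqI)
    fix k
    show "?l k = Poly_Mapping.lookup (wscale (?l (a, 0)) (wbasis a 0)) k"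
      using z[of "fst k" "snd k"] by (cases "k = (a,0)") (auto simp: lookup_wbasis)
  qed
qed

lemma der_zero: "is_wderivation T \<Longrightarrow> T 0 = 0"
  unfolding is_wderivation_def by (metis add_cancel_right_right add_0)

lemma der_add: "is_wderivation T \<Longrightarrow> T (x + y) = T x + T y"
  unfolding is_wderivation_def by blast

lemma der_diff: "is_wderivation T \<Longrightarrow> T (x - y) = T x - T y"
  using der_add[of T "x - y" y] by (simp add: algebra_simps)

lemma der_scale: "is_wderivation T \<Longrightarrow> T (wscale c x) = wscale c (T x)"
  unfolding is_wderivation_def by blast

lemma der_br: "is_wderivation T \<Longrightarrow> T (wbracket x y) = wbracket (T x) y + wbracket x (T y)"
  unfolding is_wderivation_def by blast

lemma der_comm: "is_wderivation T \<Longrightarrow> T wpartial = 0 \<Longrightarrow> T (wdiff x) = wdiff (T x)"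
  using der_br[of T wpartial x] by (simp add: wbracket_partial)

lemma der_eigen0:
  fixes T :: "'a::field_char_0 Walg \<Rightarrow> 'a Walg"
  assumes "is_wderivation T" "T wpartial = 0"
  shows "\<exists>c. T (wbasis a 0) = wscale c (wbasis a 0)"
proof -
  have "wdiff (T (wbasis a 0)) = wscale (of_int a) (T (wbasis a 0))"
    using der_comm[OF assms, of "wbasis a 0"] der_scale[OF assms(1)]
    by (simp add: wdiff_wbasis)
  then show ?thesis using wdiff_kernel by blast
qed

lemma der_basis:
  fixes T :: "'a::field_char_0 Walg \<Rightarrow> 'a Walg"
  assumes T: "is_wderivation T" "T wpartial = 0" "T (wbasis 0 1) = 0"
    and s: "T (wbasis a 0) = wscale s (wbasis a 0)"
  shows "T (wbasis a i) = wscale s (wbasis a i)"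
proof (induct i)
  case 0 then show ?case using s by simp
next
  case (Suc i)
  have rel: "T (wbracket (wbasis 0 1) E) = wbracket (wbasis 0 1) (T E)" for E
    using der_br[OF T(1), of "wbasis 0 1" E] T(3) by simp
  show ?case
  proof (cases "a = 0")
    case False
    have l: "T (wbracket (wbasis 0 1) (wbasis a i)) =
       wscale (of_int a) (T (wbasis a (Suc i))) + wscale (of_nat i - 1) (wscale s (wbasis a i))"
      unfolding wbracket_x_basis by (simp add: der_add[OF T(1)] der_scale[OF T(1)] Suc)
    have r: "wbracket (wbasis 0 1) (T (wbasis a i)) =
       wscale s (wscale (of_int a) (wbasis a (Suc i)) + wscale (of_nat i - 1) (wbasis a i))"
      unfolding Suc wbracket_scale2 wbracket_x_basis by simp
    have eq: "wscale (of_int a) (T (wbasis a (Suc i))) + wscale (of_nat i - 1) (wscale s (wbasis a i))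
       = wscale s (wscale (of_int a) (wbasis a (Suc i)) + wscale (of_nat i - 1) (wbasis a i))"
      using rel[of "wbasis a i"] l r by simp
    show ?thesis
    proof (rule poly_mapping_eqI)
      fix k
      have "of_int a * Poly_Mapping.lookup (T (wbasis a (Suc i))) k
          = of_int a * (s * Poly_Mapping.lookup (wbasis a (Suc i)) k)"
        using arg_cong[OF eq, of "\<lambda>z. Poly_Mapping.lookup z k"]
        by (simp add: lookup_add algebra_simps)
      then show "Poly_Mapping.lookup (T (wbasis a (Suc i))) k =
          Poly_Mapping.lookup (wscale s (wbasis a (Suc i))) k"
        using False by simp
    qed
  next
    case True
    let ?E = "wbasis 0 (Suc i) :: 'a Walg"
    define d where "d = T ?E - wscale s ?E"
    have "wdiff d = T (wdiff ?E) - wscale s (wdiff ?E)"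
      unfolding d_def by (simp add: wdiff_diff wdiff_scale der_comm[OF T(1,2)])
    also have "\<dots> = 0"
      using Suc True by (simp add: wdiff_wbasis der_add[OF T(1)] der_scale[OF T(1)] mult.commute)
    finally have "wdiff d = wscale (of_int 0) d" by simp
    then have dl: "d = wscale (Poly_Mapping.lookup d (0,0)) (wbasis 0 0)"
      by (rule wdiff_kernel)
    define l where "l = Poly_Mapping.lookup d (0,0)"
    have TE: "T ?E = wscale s ?E + wscale l (wbasis 0 0)"
    proof -
      have "d = wscale l (wbasis 0 0)" using dl l_def by simp
      then show ?thesis unfolding d_def by (simp add: algebra_simps)
    qed
    have b1: "wbracket (wbasis 0 1) (wbasis 0 0) = - (wbasis 0 0 :: 'a Walg)"
      using wbracket_x_basis[of 0 0] by simp
    have b2: "wbracket (wbasis 0 1) ?E = wscale (of_nat i) ?E"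
      using wbracket_x_basis[of 0 "Suc i"] by simp
    have eq: "wscale (of_nat i) (T ?E) =
        wscale s (wscale (of_nat i) ?E) + wscale l (- wbasis 0 0)"
      using rel[of ?E] unfolding b2 der_scale[OF T(1)] 
      unfolding TE wbracket_add2 wbracket_scale2 b1 b2 by simp
    have "of_nat i * l = - l"
      using arg_cong[OF eq, of "\<lambda>z. Poly_Mapping.lookup z (0,0)"] TE
      by (simp add: lookup_add lookup_minus lookup_wbasis)
    then have "(of_nat i + 1) * l = 0" by (simp add: algebra_simps)
    moreover have "(of_nat i + 1 :: 'a) \<noteq> 0"
      by (metis of_nat_Suc of_nat_eq_0_iff nat.distinct(1) add.commute)
    ultimately have "l = 0" by simp
    then show ?thesis using TE True by simp
  qed
qed

lemma wdiff_E01: "wdiff (wbasis 0 1 :: 'a::field Walg) = wpartial"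
  unfolding wdiff_wbasis wpartial_def by simp

theorem lemma4:
  fixes D :: "'a::field_char_0 Walg \<Rightarrow> 'a Walg"
  assumes "is_wderivation D"
    and "D wpartial = 0"
  shows "\<exists>f S. is_scalar_wderivation S \<and>
           (\<forall>x. D x = wscale f (wbracket wpartial x) + S x)"
proof -
  note D = assms
  have "wdiff (D (wbasis 0 1)) = wscale (of_int 0) (D (wbasis 0 1))"
    using der_comm[OF D, of "wbasis 0 1"] D(2) unfolding wdiff_E01 by simp
  then obtain f where f: "D (wbasis 0 1) = wscale f (wbasis 0 0)"
    using wdiff_kernel by blast
  define S where "S x = D x - wscale f (wbracket wpartial x)" for x
  have Sd: "is_wderivation S"
    unfolding is_wderivation_def
  proof (intro conjI allI)
    fix x y
    show "S (x + y) = S x + S y"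
      unfolding S_def by (simp add: der_add[OF D(1)] wbracket_add2 wscale_add)
  next
    fix c x
    show "S (wscale c x) = wscale c (S x)"
      unfolding S_def by (simp add: der_scale[OF D(1)] wbracket_scale2 wscale_diff mult.commute)
  next
    fix x y
    show "S (wbracket x y) = wbracket (S x) y + wbracket x (S y)"
      unfolding S_def wbracket_partial
      by (simp add: der_br[OF D(1)] wdiff_wbracket wbracket_diff1 wbracket_diff2
          wbracket_scale1 wbracket_scale2 wscale_add)
  qed
  have S0: "S wpartial = 0"
    unfolding S_def wbracket_partial using D(2) by (simp add: wpartial_one)
  have S1: "S (wbasis 0 1) = 0"
  proof -
    have "S (wbasis 0 1) = D (wbasis 0 1) - wscale f (wdiff (wbasis 0 1))"
      by (simp only: S_def wbracket_partial)
    also have "\<dots> = 0" by (simp only: f wdiff_E01 wpartial_def diff_self)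
    finally show ?thesis .
  qed
  have "is_scalar_wderivation S"
    unfolding is_scalar_wderivation_def
  proof (intro conjI allI Sd)
    fix a i
    obtain c where "S (wbasis a 0) = wscale c (wbasis a 0)"
      using der_eigen0[OF Sd S0] by blast
    then show "\<exists>c. S (wbasis a i) = wscale c (wbasis a i)"
      using der_basis[OF Sd S0 S1] by blast
  qed
  moreover have "\<forall>x. D x = wscale f (wbracket wpartial x) + S x"
    unfolding S_def by simp
  ultimately show ?thesis by blast
qed

end
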